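(* Let $A\in\mathcal{PM}(n)$ have row vectors $r_0,\ldots,r_{n-1}$. A row vector $v\in\{0,1\}^n$ is a poset vector of $A$ if and only if $v=\sum_{i\in S} r_i$ (Boolean sum) for some $S\subseteq X_n$ with $|S|=k\ge 0$ such that the principal submatrix $A[S]$ equals the $k\times k$ identity matrix $I_k$, where the empty sum ($k=0$) is $v=\mathbf{0}$.
   Context: Let $X_n=\{0,1,\ldots,n-1\}$. A naturally labeled (NL) poset on $X_n$ is a partial order $\preceq$ on $X_n$ such that $x\preceq y$ implies $x\le y$ in the usual integer order. Its poset matrix is the $n\times n$ $(0,1)$-matrix $A=(a_{i,j})_{i,j\in X_n}$ with $a_{i,j}=1$ if $j\preceq i$ and $0$ otherwise; $\mathcal{PM}(n)$ is the set of all such matrices. Vectors are over the Boolean algebra $\{0,1\}$ with $0+0=0$, $0+1=1+0=1+1=1$ (entrywise sum). For $v\in\{0,1\}^n$ (a row vector), $A^v=\begin{bmatrix}A&\mathbf{0}\\ v&1\end{bmatrix}$, and $v$ is a poset vector of $A$ if $A^v\in\mathcal{PM}(n+1)$. For $S\subseteq X_n$, $A[S]$ is the principal submatrix of $A$ with rows and columns indexed by $S$. *)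

theory Defs
  imports Main
begin

text \<open>An n x n (0,1)-matrix indexed by X_n = {0..<n} is modelled as a function
  nat => nat => bool (True = 1, False = 0); only entries with indices < n matter.
  A row vector in {0,1}^n is a function nat => bool, only entries < n matter.\<close>

type_synonym bmat = "nat \<Rightarrow> nat \<Rightarrow> bool"
type_synonym bvec = "nat \<Rightarrow> bool"

text \<open>Poset matrix: a_{i,j} = 1 iff j precedes i, for a naturally labeled partial order on X_n.\<close>
definition poset_matrix :: "nat \<Rightarrow> bmat \<Rightarrow> bool" where
  "poset_matrix n A \<longleftrightarrow>
     (\<forall>i<n. A i i) \<and>
     (\<forall>i<n. \<forall>j<n. A i j \<and> A j i \<longrightarrow> i = j) \<and>
     (\<forall>i<n. \<forall>j<n. \<forall>k<n. A i j \<and> A j k \<longrightarrow> A i k) \<and>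
     (\<forall>i<n. \<forall>j<n. A i j \<longrightarrow> j \<le> i)"

text \<open>A^v = [[A, 0], [v, 1]] as an (n+1) x (n+1) matrix.\<close>
definition ext_mat :: "nat \<Rightarrow> bmat \<Rightarrow> bvec \<Rightarrow> bmat" where
  "ext_mat n A v = (\<lambda>i j. if i < n \<and> j < n then A i j
                          else if i = n \<and> j < n then v j
                          else i = n \<and> j = n)"

definition poset_vector :: "nat \<Rightarrow> bmat \<Rightarrow> bvec \<Rightarrow> bool" where
  "poset_vector n A v \<longleftrightarrow> poset_matrix (Suc n) (ext_mat n A v)"

definition row_sum :: "bmat \<Rightarrow> nat set \<Rightarrow> bvec" where
  "row_sum A S = (\<lambda>j. \<exists>i\<in>S. A i j)"

definition principal_identity :: "bmat \<Rightarrow> nat set \<Rightarrow> bool" where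
  "principal_identity A S \<longleftrightarrow> (\<forall>i\<in>S. \<forall>j\<in>S. A i j = (i = j))"

end

theory Submission
  imports Defs
begin

lemma ext1: "i < n \<Longrightarrow> j < n \<Longrightarrow> ext_mat n A v i j = A i j" by (simp add: ext_mat_def)
lemma ext2: "j < n \<Longrightarrow> ext_mat n A v n j = v j" by (simp add: ext_mat_def)
lemma ext3: "i < n \<Longrightarrow> ext_mat n A v i n = False" by (simp add: ext_mat_def)
lemma ext4: "ext_mat n A v n n = True" by (simp add: ext_mat_def)

lemma lessSucE: "i < Suc n \<Longrightarrow> (i < n \<Longrightarrow> P) \<Longrightarrow> (i = n \<Longrightarrow> P) \<Longrightarrow> P" by linarith

lemma pv_iff:
  assumes "poset_matrix n A"
  shows "poset_vector n A v \<longleftrightarrow> (\<forall>j<n. \<forall>k<n. v j \<and> A j k \<longrightarrow> v k)"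
proof
  assume "poset_vector n A v"
  hence T: "\<And>i j k. i<Suc n \<Longrightarrow> j<Suc n \<Longrightarrow> k<Suc n \<Longrightarrow> ext_mat n A v i j \<Longrightarrow> ext_mat n A v j k \<Longrightarrow> ext_mat n A v i k"
    unfolding poset_vector_def poset_matrix_def by blast
  show "\<forall>j<n. \<forall>k<n. v j \<and> A j k \<longrightarrow> v k"
  proof (intro allI impI)
    fix j k assume a: "j<n" "k<n" "v j \<and> A j k"
    have "ext_mat n A v n k" using T[of n j k] a by (simp add: ext1 ext2)
    thus "v k" using a by (simp add: ext2)
  qed
next
  assume D: "\<forall>j<n. \<forall>k<n. v j \<and> A j k \<longrightarrow> v k"
  have r: "\<And>i. i<n \<Longrightarrow> A i i" and an: "\<And>i j. i<n \<Longrightarrow> j<n \<Longrightarrow> A i j \<Longrightarrow> A j i \<Longrightarrow> i = j"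
    and t: "\<And>i j k. i<n \<Longrightarrow> j<n \<Longrightarrow> k<n \<Longrightarrow> A i j \<Longrightarrow> A j k \<Longrightarrow> A i k"
    and l: "\<And>i j. i<n \<Longrightarrow> j<n \<Longrightarrow> A i j \<Longrightarrow> j \<le> i" using assms unfolding poset_matrix_def by blast+
  show "poset_vector n A v" unfolding poset_vector_def poset_matrix_def
  proof (intro conjI allI impI)
    fix i assume "i < Suc n" thus "ext_mat n A v i i"
      by (rule lessSucE) (simp_all add: ext1 ext4 r)
  next
    fix i j assume i: "i < Suc n" and j: "j < Suc n" and e: "ext_mat n A v i j \<and> ext_mat n A v j i"
    show "i = j"
      using i apply (rule lessSucE)
       using j apply (rule lessSucE)
        using e apply (simp add: ext1) apply (metis an)
       using e apply (simp add: ext3)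
      using j apply (rule lessSucE)
       using e apply (simp add: ext3)
      apply simp
      done
  next
    fix i j k assume i: "i < Suc n" and j: "j < Suc n" and k: "k < Suc n" and e: "ext_mat n A v i j \<and> ext_mat n A v j k"
    show "ext_mat n A v i k"
      using i apply (rule lessSucE)
       using j apply (rule lessSucE)
        using k apply (rule lessSucE)
         using e apply (simp add: ext1) apply (metis t)
        using e apply (simp add: ext1 ext3)
       using e apply (simp add: ext3)
      using j apply (rule lessSucE)
       using k apply (rule lessSucE)
        using e apply (simp add: ext1 ext2) apply (metis D)
       using e apply (simp add: ext3)
      using e apply simp
      done
  next
    fix i j assume i: "i < Suc n" and j: "j < Suc n" and e: "ext_mat n A v i j"
    show "j \<le> i"
      using i apply (rule lessSucE)
       using j apply (rule lessSucE)
        using e apply (simp add: ext1) apply (metis l)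
       using e apply (simp add: ext3)
      using j by simp
  qed
qed

theorem theorem2p2:
  fixes n :: nat and A :: bmat and v :: bvec
  assumes "poset_matrix n A"
  shows "poset_vector n A v \<longleftrightarrow>
    (\<exists>S. S \<subseteq> {..<n} \<and> principal_identity A S \<and> (\<forall>j<n. v j = row_sum A S j))"
proof -
  have rf: "\<And>i. i<n \<Longrightarrow> A i i" and anti: "\<And>i j. i<n \<Longrightarrow> j<n \<Longrightarrow> A i j \<Longrightarrow> A j i \<Longrightarrow> i = j"
    and tr: "\<And>i j k. i<n \<Longrightarrow> j<n \<Longrightarrow> k<n \<Longrightarrow> A i j \<Longrightarrow> A j k \<Longrightarrow> A i k"
    and nl: "\<And>i j. i<n \<Longrightarrow> j<n \<Longrightarrow> A i j \<Longrightarrow> j \<le> i"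
    using assms unfolding poset_matrix_def by blast+
  show ?thesis
  proof
    assume "poset_vector n A v"
    hence dc0: "\<forall>j<n. \<forall>k<n. v j \<and> A j k \<longrightarrow> v k"
      by (rule iffD1[OF pv_iff[OF assms]])
    have dc: "\<And>j k. j<n \<Longrightarrow> k<n \<Longrightarrow> v j \<Longrightarrow> A j k \<Longrightarrow> v k"
      using dc0 by blast
    define D where "D = {j. j < n \<and> v j}"
    define S where "S = {i\<in>D. \<forall>j\<in>D. A j i \<longrightarrow> j = i}"
    have SD: "S \<subseteq> {..<n}" unfolding S_def D_def by auto
    have PI: "principal_identity A S"
      unfolding principal_identity_def
    proof (intro ballI)
      fix i j assume i: "i \<in> S" and j: "j \<in> S"
      have iD: "i \<in> D" "i < n" and jm: "\<forall>k\<in>D. A k j \<longrightarrow> k = j"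
        using i j unfolding S_def D_def by auto
      show "A i j = (i = j)"
      proof
        assume "A i j" thus "i = j" using jm iD by blast
      next
        assume "i = j" thus "A i j" using rf[OF iD(2)] by simp
      qed
    qed
    have "v j = row_sum A S j" if j: "j < n" for j
    proof
      assume vj: "v j"
      define T where "T = {i\<in>D. A i j}"
      have fT: "finite T" unfolding T_def D_def by auto
      have jT: "j \<in> T" unfolding T_def D_def using j vj rf by auto
      define m where "m = Max T"
      have mT: "m \<in> T" unfolding m_def using fT jT Max_in by blast
      have "m \<in> S" unfolding S_def
      proof (intro CollectI conjI ballI impI)
        show "m \<in> D" using mT T_def by auto
        fix k assume k: "k \<in> D" and Akm: "A k m"
        have "A k j" using tr[of k m j] k mT Akm j unfolding T_def D_def by auto
        hence "k \<in> T" using k T_def by auto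
        hence "k \<le> m" unfolding m_def using fT by simp
        moreover have "m \<le> k" using nl[of k m] k mT Akm unfolding T_def D_def by auto
        ultimately show "k = m" by simp
      qed
      thus "row_sum A S j" unfolding row_sum_def using mT T_def by auto
    next
      assume "row_sum A S j"
      then obtain i where "i \<in> S" "A i j" unfolding row_sum_def by auto
      thus "v j" using dc[of i j] j unfolding S_def D_def by auto
    qed
    thus "\<exists>S. S \<subseteq> {..<n} \<and> principal_identity A S \<and> (\<forall>j<n. v j = row_sum A S j)"
      using SD PI by blast
  next
    assume "\<exists>S. S \<subseteq> {..<n} \<and> principal_identity A S \<and> (\<forall>j<n. v j = row_sum A S j)"
    then obtain S where S: "S \<subseteq> {..<n}" "\<forall>j<n. v j = row_sum A S j" by blast
    have "\<forall>j<n. \<forall>k<n. v j \<and> A j k \<longrightarrow> v k"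
    proof (intro allI impI)
      fix j k assume "j<n" "k<n" "v j \<and> A j k"
      then obtain i where "i \<in> S" "A i j" "A j k" using S unfolding row_sum_def by auto
      hence "A i k" using tr[of i j k] S(1) \<open>j<n\<close> \<open>k<n\<close> by auto
      thus "v k" using S \<open>i\<in>S\<close> \<open>k<n\<close> unfolding row_sum_def by auto
    qed
    thus "poset_vector n A v" by (rule iffD2[OF pv_iff[OF assms]])
  qed
qed

end
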